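(* Let $C\in\mathscr{C}$ and let $z_C\colon C\to Z_C$ be obtained as follows: choose a distinguished triangle $V\to U\overset{a}{\to}C\to V[1]$ with $U\in\mathcal{U},V\in\mathcal{V}$; choose a distinguished triangle $T[-1]\to S[-1]\overset{b}{\to}U\to T$ with $S\in\mathcal{S},T\in\mathcal{T}$; and choose a distinguished triangle $S[-1]\overset{a\circ b}{\to}C\overset{z_C}{\to}Z_C\to S$. Then for every $Y\in\mathscr{C}^+$, the map \[ -\circ\underline{z}_C\colon\underline{\mathscr{C}}^+(Z_C,Y)\to\underline{\mathscr{C}}(C,Y) \] is bijective.
   Context: $\mathscr{C}$ is a triangulated category with shift $[1]$; subcategories are full, additive, closed under isomorphisms and direct summands. $\mathrm{Ext}^1(X,Y)=\mathscr{C}(X,Y[1])$. $\mathcal{M}\ast\mathcal{N}$ is the full subcategory of objects $C$ admitting a distinguished triangle $M\to C\to N\to M[1]$ with $M\in\mathcal{M}$, $N\in\mathcal{N}$. A cotorsion pair $(\mathcal{U},\mathcal{V})$: $\mathrm{Ext}^1(\mathcal{U},\mathcal{V})=0$ and $\mathscr{C}=\mathcal{U}\ast\mathcal{V}[1]$. Fix a twin cotorsion pair, i.e. cotorsion pairs $(\mathcal{S},\mathcal{T}),(\mathcal{U},\mathcal{V})$ with $\mathrm{Ext}^1(\mathcal{S},\mathcal{V})=0$. Put $\mathcal{W}=\mathcal{T}\cap\mathcal{U}$, $\mathscr{C}^+=\mathcal{W}\ast\mathcal{V}[1]$. $\underline{\mathscr{C}}$ and $\underline{\mathscr{C}}^+$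 denote the ideal quotients of $\mathscr{C}$ and $\mathscr{C}^+$ by morphisms factoring through objects of $\mathcal{W}$, and $\underline{f}$ is the image of a morphism $f$. (One has $Z_C\in\mathscr{C}^+$.) *)

theory Defs
  imports Main
begin

text \<open>Objects are the elements of type 'o; morphisms are elements of type 'm;
Hom X Y is the set of morphisms X to Y. cmp g f is the composite "g after f".\<close>

record ('o, 'm) tcat =
  Hom  :: "'o \<Rightarrow> 'o \<Rightarrow> 'm set"
  cmp  :: "'m \<Rightarrow> 'm \<Rightarrow> 'm"
  idm  :: "'o \<Rightarrow> 'm"
  add  :: "'m \<Rightarrow> 'm \<Rightarrow> 'm"
  neg  :: "'m \<Rightarrow> 'm"
  zro  :: "'o \<Rightarrow> 'o \<Rightarrow> 'm"
  sh   :: "'o \<Rightarrow> 'o"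
  shm  :: "'m \<Rightarrow> 'm"
  dist :: "'o \<Rightarrow> 'o \<Rightarrow> 'o \<Rightarrow> 'm \<Rightarrow> 'm \<Rightarrow> 'm \<Rightarrow> bool"

definition iso :: "('o,'m) tcat \<Rightarrow> 'm \<Rightarrow> 'o \<Rightarrow> 'o \<Rightarrow> bool" where
  "iso K f X Y \<longleftrightarrow> f \<in> Hom K X Y \<and>
     (\<exists>g \<in> Hom K Y X. cmp K g f = idm K X \<and> cmp K f g = idm K Y)"

definition isomorphic :: "('o,'m) tcat \<Rightarrow> 'o \<Rightarrow> 'o \<Rightarrow> bool" where
  "isomorphic K X Y \<longleftrightarrow> (\<exists>f. iso K f X Y)"

definition is_zero :: "('o,'m) tcat \<Rightarrow> 'o \<Rightarrow> bool" where
  "is_zero K Z0 \<longleftrightarrow> (\<forall>X. Hom K Z0 X = {zro K Z0 X} \<and> Hom K X Z0 = {zro K X Z0})"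

definition is_biprod :: "('o,'m) tcat \<Rightarrow> 'o \<Rightarrow> 'o \<Rightarrow> 'o \<Rightarrow> bool" where
  "is_biprod K P X Y \<longleftrightarrow> (\<exists>i1 i2 p1 p2.
     i1 \<in> Hom K X P \<and> i2 \<in> Hom K Y P \<and> p1 \<in> Hom K P X \<and> p2 \<in> Hom K P Y \<and>
     cmp K p1 i1 = idm K X \<and> cmp K p2 i2 = idm K Y \<and>
     cmp K p1 i2 = zro K Y X \<and> cmp K p2 i1 = zro K X Y \<and>
     add K (cmp K i1 p1) (cmp K i2 p2) = idm K P)"

locale triangulated =
  fixes K :: "('o,'m) tcat"
  assumes
    cmp_closed: "\<And>X Y Z f g. f \<in> Hom K X Y \<Longrightarrow> g \<in> Hom K Y Z \<Longrightarrow> cmp K g f \<in> Hom K X Z"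
  and cmp_assoc: "\<And>W X Y Z f g h. f \<in> Hom K W X \<Longrightarrow> g \<in> Hom K X Y \<Longrightarrow> h \<in> Hom K Y Z \<Longrightarrow>
        cmp K h (cmp K g f) = cmp K (cmp K h g) f"
  and idm_closed: "\<And>X. idm K X \<in> Hom K X X"
  and idm_left: "\<And>X Y f. f \<in> Hom K X Y \<Longrightarrow> cmp K (idm K Y) f = f"
  and idm_right: "\<And>X Y f. f \<in> Hom K X Y \<Longrightarrow> cmp K f (idm K X) = f"
  and add_closed: "\<And>X Y f g. f \<in> Hom K X Y \<Longrightarrow> g \<in> Hom K X Y \<Longrightarrow> add K f g \<in> Hom K X Y"
  and add_assoc: "\<And>X Y f g h. f \<in> Hom K X Y \<Longrightarrow> g \<in> Hom K X Y \<Longrightarrow> h \<in> Hom K X Y \<Longrightarrow>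
        add K (add K f g) h = add K f (add K g h)"
  and add_comm: "\<And>X Y f g. f \<in> Hom K X Y \<Longrightarrow> g \<in> Hom K X Y \<Longrightarrow> add K f g = add K g f"
  and zro_closed: "\<And>X Y. zro K X Y \<in> Hom K X Y"
  and add_zro: "\<And>X Y f. f \<in> Hom K X Y \<Longrightarrow> add K f (zro K X Y) = f"
  and neg_closed: "\<And>X Y f. f \<in> Hom K X Y \<Longrightarrow> neg K f \<in> Hom K X Y"
  and add_neg: "\<And>X Y f. f \<in> Hom K X Y \<Longrightarrow> add K f (neg K f) = zro K X Y"
  and cmp_add_left: "\<And>X Y Z f g h. f \<in> Hom K X Y \<Longrightarrow> g \<in> Hom K X Y \<Longrightarrow> h \<in> Hom K Y Z \<Longrightarrow>
        cmp K h (add K f g) = add K (cmp K h f) (cmp K h g)"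
  and cmp_add_right: "\<And>X Y Z f g h. f \<in> Hom K Y Z \<Longrightarrow> g \<in> Hom K Y Z \<Longrightarrow> h \<in> Hom K X Y \<Longrightarrow>
        cmp K (add K f g) h = add K (cmp K f h) (cmp K g h)"
  and zero_exists: "\<exists>Z0. is_zero K Z0"
  and biprod_exists: "\<And>X Y. \<exists>P. is_biprod K P X Y"
  and shm_closed: "\<And>X Y f. f \<in> Hom K X Y \<Longrightarrow> shm K f \<in> Hom K (sh K X) (sh K Y)"
  and shm_cmp: "\<And>X Y Z f g. f \<in> Hom K X Y \<Longrightarrow> g \<in> Hom K Y Z \<Longrightarrow>
        shm K (cmp K g f) = cmp K (shm K g) (shm K f)"
  and shm_idm: "\<And>X. shm K (idm K X) = idm K (sh K X)"
  and shm_add: "\<And>X Y f g. f \<in> Hom K X Y \<Longrightarrow> g \<in> Hom K X Y \<Longrightarrow>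
        shm K (add K f g) = add K (shm K f) (shm K g)"
  and shm_fully_faithful: "\<And>X Y. bij_betw (shm K) (Hom K X Y) (Hom K (sh K X) (sh K Y))"
  and sh_ess_surj: "\<And>Y. \<exists>X. isomorphic K (sh K X) Y"
  and dist_typed: "\<And>X Y Z f g h. dist K X Y Z f g h \<Longrightarrow>
        f \<in> Hom K X Y \<and> g \<in> Hom K Y Z \<and> h \<in> Hom K Z (sh K X)"
  and dist_iso: "\<And>X Y Z f g h X' Y' Z' f' g' h' \<alpha> \<beta> \<gamma>.
        dist K X Y Z f g h \<Longrightarrow>
        f' \<in> Hom K X' Y' \<Longrightarrow> g' \<in> Hom K Y' Z' \<Longrightarrow> h' \<in> Hom K Z' (sh K X') \<Longrightarrow>
        iso K \<alpha> X X' \<Longrightarrow> iso K \<beta> Y Y' \<Longrightarrow> iso K \<gamma> Z Z' \<Longrightarrow>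
        cmp K f' \<alpha> = cmp K \<beta> f \<Longrightarrow> cmp K g' \<beta> = cmp K \<gamma> g \<Longrightarrow>
        cmp K h' \<gamma> = cmp K (shm K \<alpha>) h \<Longrightarrow> dist K X' Y' Z' f' g' h'"
  and dist_id: "\<And>X Z0. is_zero K Z0 \<Longrightarrow> dist K X X Z0 (idm K X) (zro K X Z0) (zro K Z0 (sh K X))"
  and dist_exists: "\<And>X Y f. f \<in> Hom K X Y \<Longrightarrow> \<exists>Z g h. dist K X Y Z f g h"
  and dist_rotate: "\<And>X Y Z f g h. dist K X Y Z f g h \<longleftrightarrow> dist K Y Z (sh K X) g h (neg K (shm K f))"
  and dist_morph: "\<And>X Y Z f g h X' Y' Z' f' g' h' \<alpha> \<beta>.
        dist K X Y Z f g h \<Longrightarrow> dist K X' Y' Z' f' g' h' \<Longrightarrow>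
        \<alpha> \<in> Hom K X X' \<Longrightarrow> \<beta> \<in> Hom K Y Y' \<Longrightarrow> cmp K \<beta> f = cmp K f' \<alpha> \<Longrightarrow>
        \<exists>\<gamma> \<in> Hom K Z Z'. cmp K \<gamma> g = cmp K g' \<beta> \<and> cmp K h' \<gamma> = cmp K (shm K \<alpha>) h"
  and octahedral: "\<And>X Y Z Z' X' Y' f g u u' v v' w w'.
        dist K X Y Z' f u u' \<Longrightarrow> dist K Y Z X' g v v' \<Longrightarrow> dist K X Z Y' (cmp K g f) w w' \<Longrightarrow>
        \<exists>c d. dist K Z' Y' X' c d (cmp K (shm K u) v') \<and>
              cmp K c u = cmp K w g \<and> cmp K w' c = u' \<and>
              cmp K d w = v \<and> cmp K v' d = cmp K (shm K f) w'"

text \<open>Subcategories: full, additive, closed under isomorphisms and direct summands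
(identified with their class of objects).\<close>

definition subcat :: "('o,'m) tcat \<Rightarrow> 'o set \<Rightarrow> bool" where
  "subcat K \<X> \<longleftrightarrow>
     (\<forall>X Y. X \<in> \<X> \<and> isomorphic K X Y \<longrightarrow> Y \<in> \<X>) \<and>
     (\<exists>Z0 \<in> \<X>. is_zero K Z0) \<and>
     (\<forall>P X Y. X \<in> \<X> \<and> Y \<in> \<X> \<and> is_biprod K P X Y \<longrightarrow> P \<in> \<X>) \<and>
     (\<forall>P X Y. P \<in> \<X> \<and> is_biprod K P X Y \<longrightarrow> X \<in> \<X>)"

text \<open>Ext^1(X,Y) = Hom(X, Y[1]) vanishes on the given classes.\<close>
definition ext1_zero :: "('o,'m) tcat \<Rightarrow> 'o set \<Rightarrow> 'o set \<Rightarrow> bool" where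
  "ext1_zero K \<X> \<Y> \<longleftrightarrow> (\<forall>X \<in> \<X>. \<forall>Y \<in> \<Y>. Hom K X (sh K Y) = {zro K X (sh K Y)})"

definition shift_sub :: "('o,'m) tcat \<Rightarrow> 'o set \<Rightarrow> 'o set" where
  "shift_sub K \<X> = {N. \<exists>X \<in> \<X>. isomorphic K N (sh K X)}"

definition ext_star :: "('o,'m) tcat \<Rightarrow> 'o set \<Rightarrow> 'o set \<Rightarrow> 'o set" where
  "ext_star K \<M> \<N> = {C. \<exists>M \<in> \<M>. \<exists>N \<in> \<N>. \<exists>f g h. dist K M C N f g h}"

definition cotorsion_pair :: "('o,'m) tcat \<Rightarrow> 'o set \<Rightarrow> 'o set \<Rightarrow> bool" where
  "cotorsion_pair K \<U> \<V> \<longleftrightarrow> subcat K \<U> \<and> subcat K \<V> \<and>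
     ext1_zero K \<U> \<V> \<and> ext_star K \<U> (shift_sub K \<V>) = UNIV"

definition twin_cotorsion_pair ::
  "('o,'m) tcat \<Rightarrow> 'o set \<Rightarrow> 'o set \<Rightarrow> 'o set \<Rightarrow> 'o set \<Rightarrow> bool" where
  "twin_cotorsion_pair K \<S> \<T> \<U> \<V> \<longleftrightarrow>
     cotorsion_pair K \<S> \<T> \<and> cotorsion_pair K \<U> \<V> \<and> ext1_zero K \<S> \<V>"

text \<open>Ideal quotient by morphisms factoring through objects of W.\<close>
definition factors_through :: "('o,'m) tcat \<Rightarrow> 'o set \<Rightarrow> 'o \<Rightarrow> 'o \<Rightarrow> 'm \<Rightarrow> bool" where
  "factors_through K \<W> X Y f \<longleftrightarrow>
     (\<exists>W \<in> \<W>. \<exists>g \<in> Hom K X W. \<exists>h \<in> Hom K W Y. f = cmp K h g)"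

definition stable_rel :: "('o,'m) tcat \<Rightarrow> 'o set \<Rightarrow> 'o \<Rightarrow> 'o \<Rightarrow> ('m \<times> 'm) set" where
  "stable_rel K \<W> X Y = {(f, g). f \<in> Hom K X Y \<and> g \<in> Hom K X Y \<and>
       factors_through K \<W> X Y (add K f (neg K g))}"

text \<open>Hom-set of the ideal quotient, and the class (underline f) of a morphism.\<close>
definition stable_hom :: "('o,'m) tcat \<Rightarrow> 'o set \<Rightarrow> 'o \<Rightarrow> 'o \<Rightarrow> 'm set set" where
  "stable_hom K \<W> X Y = Hom K X Y // stable_rel K \<W> X Y"

definition stclass :: "('o,'m) tcat \<Rightarrow> 'o set \<Rightarrow> 'o \<Rightarrow> 'o \<Rightarrow> 'm \<Rightarrow> 'm set" where
  "stclass K \<W> X Y f = stable_rel K \<W> X Y `` {f}"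

end

theory Submission
  imports Defs
begin

context triangulated
begin

lemma add_zro_left: "f \<in> Hom K X Y \<Longrightarrow> add K (zro K X Y) f = f"
  using add_comm[OF _ zro_closed] add_zro by metis

lemma neg_unique:
  assumes a: "a \<in> Hom K X Y" and b: "b \<in> Hom K X Y" and e: "add K a b = zro K X Y"
  shows "b = neg K a"
proof -
  have na: "neg K a \<in> Hom K X Y" using neg_closed[OF a] .
  have "b = add K b (zro K X Y)" using add_zro b by simp
  also have "\<dots> = add K b (add K a (neg K a))" using add_neg a by simp
  also have "\<dots> = add K (add K b a) (neg K a)" using add_assoc[OF b a na] by simp
  also have "\<dots> = add K (zro K X Y) (neg K a)" using add_comm[OF a b] e by simp
  also have "\<dots> = neg K a" using add_zro_left[OF na] .
  finally show ?thesis .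
qed

lemma neg_neg: "a \<in> Hom K X Y \<Longrightarrow> neg K (neg K a) = a"
proof -
  assume a: "a \<in> Hom K X Y"
  have na: "neg K a \<in> Hom K X Y" using neg_closed[OF a] .
  have "add K (neg K a) a = zro K X Y" using add_comm[OF a na] add_neg[OF a] by simp
  then show ?thesis using neg_unique[OF na a] by simp
qed

lemma cancel_idem:
  assumes a: "a \<in> Hom K X Y" and e: "add K a a = a"
  shows "a = zro K X Y"
proof -
  have na: "neg K a \<in> Hom K X Y" using neg_closed[OF a] .
  have "a = add K a (zro K X Y)" using add_zro a by simp
  also have "\<dots> = add K a (add K a (neg K a))" using add_neg a by simp
  also have "\<dots> = add K (add K a a) (neg K a)" using add_assoc[OF a a na] by simp
  also have "\<dots> = zro K X Y" using e add_neg a by simp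
  finally show ?thesis .
qed

lemma cmp_zro_right: "f \<in> Hom K X Y \<Longrightarrow> cmp K f (zro K W X) = zro K W Y"
proof -
  assume f: "f \<in> Hom K X Y"
  have c: "cmp K f (zro K W X) \<in> Hom K W Y" using cmp_closed[OF zro_closed f] .
  have "add K (cmp K f (zro K W X)) (cmp K f (zro K W X)) = cmp K f (add K (zro K W X) (zro K W X))"
    using cmp_add_left[OF zro_closed zro_closed f] by simp
  also have "\<dots> = cmp K f (zro K W X)" using add_zro[OF zro_closed] by simp
  finally show ?thesis using cancel_idem[OF c] by simp
qed

lemma cmp_zro_left: "f \<in> Hom K X Y \<Longrightarrow> cmp K (zro K Y Z) f = zro K X Z"
proof -
  assume f: "f \<in> Hom K X Y"
  have c: "cmp K (zro K Y Z) f \<in> Hom K X Z" using cmp_closed[OF f zro_closed] .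
  have "add K (cmp K (zro K Y Z) f) (cmp K (zro K Y Z) f) = cmp K (add K (zro K Y Z) (zro K Y Z)) f"
    using cmp_add_right[OF zro_closed zro_closed f] by simp
  also have "\<dots> = cmp K (zro K Y Z) f" using add_zro[OF zro_closed] by simp
  finally show ?thesis using cancel_idem[OF c] by simp
qed

lemma cmp_neg_left:
  assumes g: "g \<in> Hom K Y Z" and f: "f \<in> Hom K X Y"
  shows "cmp K (neg K g) f = neg K (cmp K g f)"
proof -
  have "add K (cmp K g f) (cmp K (neg K g) f) = cmp K (add K g (neg K g)) f"
    using cmp_add_right[OF g neg_closed[OF g] f] by simp
  also have "\<dots> = zro K X Z" using add_neg g cmp_zro_left f by simp
  finally show ?thesis using neg_unique[OF cmp_closed[OF f g] cmp_closed[OF f neg_closed[OF g]]] by simp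
qed

lemma cmp_neg_right:
  assumes g: "g \<in> Hom K Y Z" and f: "f \<in> Hom K X Y"
  shows "cmp K g (neg K f) = neg K (cmp K g f)"
proof -
  have "add K (cmp K g f) (cmp K g (neg K f)) = cmp K g (add K f (neg K f))"
    using cmp_add_left[OF f neg_closed[OF f] g] by simp
  also have "\<dots> = zro K X Z" using add_neg f cmp_zro_right g by simp
  finally show ?thesis using neg_unique[OF cmp_closed[OF f g] cmp_closed[OF neg_closed[OF f] g]] by simp
qed

lemma neg_zro: "neg K (zro K X Y) = zro K X Y"
  using neg_unique[OF zro_closed zro_closed add_zro[OF zro_closed]] by simp

lemma shm_zro: "shm K (zro K X Y) = zro K (sh K X) (sh K Y)"
proof -
  have c: "shm K (zro K X Y) \<in> Hom K (sh K X) (sh K Y)" using shm_closed[OF zro_closed] .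
  have "add K (shm K (zro K X Y)) (shm K (zro K X Y)) = shm K (add K (zro K X Y) (zro K X Y))"
    using shm_add[OF zro_closed zro_closed] by simp
  also have "\<dots> = shm K (zro K X Y)" using add_zro[OF zro_closed] by simp
  finally show ?thesis using cancel_idem[OF c] by simp
qed

lemma shm_neg: "f \<in> Hom K X Y \<Longrightarrow> shm K (neg K f) = neg K (shm K f)"
proof -
  assume f: "f \<in> Hom K X Y"
  have "add K (shm K f) (shm K (neg K f)) = shm K (add K f (neg K f))"
    using shm_add[OF f neg_closed[OF f]] by simp
  also have "\<dots> = zro K (sh K X) (sh K Y)" using add_neg f shm_zro by simp
  finally show ?thesis using neg_unique[OF shm_closed[OF f] shm_closed[OF neg_closed[OF f]]] by simp
qed

lemma shm_inj: "f \<in> Hom K X Y \<Longrightarrow> g \<in> Hom K X Y \<Longrightarrow> shm K f = shm K g \<Longrightarrow> f = g"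
  by (rule inj_onD[OF bij_betw_imp_inj_on[OF shm_fully_faithful]])

lemma shm_surj: "c \<in> Hom K (sh K X) (sh K Y) \<Longrightarrow> \<exists>e \<in> Hom K X Y. shm K e = c"
proof -
  assume c: "c \<in> Hom K (sh K X) (sh K Y)"
  then have "c \<in> shm K ` Hom K X Y" using bij_betw_imp_surj_on[OF shm_fully_faithful[of X Y]] by simp
  then show ?thesis by blast
qed

lemma neg_add: "a \<in> Hom K X Y \<Longrightarrow> b \<in> Hom K X Y \<Longrightarrow>
    neg K (add K a b) = add K (neg K a) (neg K b)"
proof -
  assume a: "a \<in> Hom K X Y" and b: "b \<in> Hom K X Y"
  have na: "neg K a \<in> Hom K X Y" and nb: "neg K b \<in> Hom K X Y" using a b neg_closed by auto
  have ab: "add K a b \<in> Hom K X Y" using add_closed[OF a b] .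
  have nab: "add K (neg K a) (neg K b) \<in> Hom K X Y" using add_closed[OF na nb] .
  have "add K (add K a b) (add K (neg K a) (neg K b)) = add K a (add K b (add K (neg K a) (neg K b)))"
    using add_assoc[OF a b nab] .
  also have "\<dots> = add K a (add K b (add K (neg K b) (neg K a)))"
    using add_comm[OF na nb] by simp
  also have "\<dots> = add K a (add K (add K b (neg K b)) (neg K a))"
    using add_assoc[OF b nb na] by simp
  also have "\<dots> = add K a (neg K a)" using add_neg[OF b] add_zro_left[OF na] by simp
  also have "\<dots> = zro K X Y" using add_neg a by simp
  finally show ?thesis using neg_unique[OF ab nab] by simp
qed

lemma sub_sym: "f \<in> Hom K X Y \<Longrightarrow> g \<in> Hom K X Y \<Longrightarrow>
   neg K (add K f (neg K g)) = add K g (neg K f)"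
proof -
  assume f: "f \<in> Hom K X Y" and g: "g \<in> Hom K X Y"
  have "neg K (add K f (neg K g)) = add K (neg K f) (neg K (neg K g))"
    using neg_add[OF f neg_closed[OF g]] .
  also have "\<dots> = add K (neg K f) g" using neg_neg[OF g] by simp
  also have "\<dots> = add K g (neg K f)" using add_comm[OF neg_closed[OF f] g] .
  finally show ?thesis .
qed

lemma sub_trans: "f \<in> Hom K X Y \<Longrightarrow> g \<in> Hom K X Y \<Longrightarrow> h \<in> Hom K X Y \<Longrightarrow>
   add K (add K f (neg K g)) (add K g (neg K h)) = add K f (neg K h)"
proof -
  assume f: "f \<in> Hom K X Y" and g: "g \<in> Hom K X Y" and h: "h \<in> Hom K X Y"
  have ng: "neg K g \<in> Hom K X Y" and nh: "neg K h \<in> Hom K X Y" using g h neg_closed by auto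
  have gh: "add K g (neg K h) \<in> Hom K X Y" using add_closed[OF g nh] .
  have "add K (add K f (neg K g)) (add K g (neg K h)) = add K f (add K (neg K g) (add K g (neg K h)))"
    using add_assoc[OF f ng gh] .
  also have "\<dots> = add K f (add K (add K (neg K g) g) (neg K h))"
    using add_assoc[OF ng g nh] by simp
  also have "\<dots> = add K f (add K (zro K X Y) (neg K h))"
    using add_comm[OF g ng] add_neg[OF g] by simp
  also have "\<dots> = add K f (neg K h)" using add_zro_left nh by simp
  finally show ?thesis .
qed

lemma sub_add_cancel: "d \<in> Hom K X Y \<Longrightarrow> x \<in> Hom K X Y \<Longrightarrow> add K (add K d (neg K x)) x = d"
proof -
  assume d: "d \<in> Hom K X Y" and x: "x \<in> Hom K X Y"
  have nx: "neg K x \<in> Hom K X Y" using neg_closed[OF x] .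
  have "add K (add K d (neg K x)) x = add K d (add K (neg K x) x)" using add_assoc[OF d nx x] .
  also have "\<dots> = d" using add_comm[OF x nx] add_neg[OF x] add_zro[OF d] by simp
  finally show ?thesis .
qed

lemma cmp_sub_right: "e1 \<in> Hom K Z Y \<Longrightarrow> e2 \<in> Hom K Z Y \<Longrightarrow> z \<in> Hom K C Z \<Longrightarrow>
   cmp K (add K e1 (neg K e2)) z = add K (cmp K e1 z) (neg K (cmp K e2 z))"
  by (simp add: cmp_add_right cmp_neg_left neg_closed)

lemma ft_zro: "W0 \<in> Ws \<Longrightarrow> factors_through K Ws X Y (zro K X Y)"
  unfolding factors_through_def
proof -
  assume W0: "W0 \<in> Ws"
  have "zro K X Y = cmp K (zro K W0 Y) (zro K X W0)" using cmp_zro_left[OF zro_closed[of X W0], of Y] by simp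
  then show "\<exists>W\<in>Ws. \<exists>g\<in>Hom K X W. \<exists>h\<in>Hom K W Y. zro K X Y = cmp K h g"
    using W0 zro_closed by blast
qed

lemma ft_neg: "factors_through K Ws X Y f \<Longrightarrow> factors_through K Ws X Y (neg K f)"
  unfolding factors_through_def
  using cmp_neg_left neg_closed by metis

lemma ft_cmp_right: "factors_through K Ws X Y f \<Longrightarrow> z \<in> Hom K C X \<Longrightarrow>
   factors_through K Ws C Y (cmp K f z)"
proof -
  assume f: "factors_through K Ws X Y f" and z: "z \<in> Hom K C X"
  obtain W g h where W: "W \<in> Ws" and g: "g \<in> Hom K X W" and h: "h \<in> Hom K W Y"
    and e: "f = cmp K h g" using f unfolding factors_through_def by blast
  have "cmp K f z = cmp K h (cmp K g z)" using e cmp_assoc[OF z g h] by simp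
  then show ?thesis unfolding factors_through_def using W h cmp_closed[OF z g] by blast
qed

lemma ft_add:
  assumes cl: "\<And>P A B. A \<in> Ws \<Longrightarrow> B \<in> Ws \<Longrightarrow> is_biprod K P A B \<Longrightarrow> P \<in> Ws"
    and f1: "factors_through K Ws X Y f1" and f2: "factors_through K Ws X Y f2"
  shows "factors_through K Ws X Y (add K f1 f2)"
proof -
  obtain W1 g1 h1 where W1: "W1 \<in> Ws" and g1: "g1 \<in> Hom K X W1" and h1: "h1 \<in> Hom K W1 Y"
    and e1: "f1 = cmp K h1 g1" using f1 unfolding factors_through_def by blast
  obtain W2 g2 h2 where W2: "W2 \<in> Ws" and g2: "g2 \<in> Hom K X W2" and h2: "h2 \<in> Hom K W2 Y"
    and e2: "f2 = cmp K h2 g2" using f2 unfolding factors_through_def by blast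
  obtain P where bp: "is_biprod K P W1 W2" using biprod_exists by blast
  then obtain i1 i2 p1 p2 where i1: "i1 \<in> Hom K W1 P" and i2: "i2 \<in> Hom K W2 P"
    and p1: "p1 \<in> Hom K P W1" and p2: "p2 \<in> Hom K P W2"
    and r1: "cmp K p1 i1 = idm K W1" and r2: "cmp K p2 i2 = idm K W2"
    and r3: "cmp K p1 i2 = zro K W2 W1" and r4: "cmp K p2 i1 = zro K W1 W2"
    unfolding is_biprod_def by blast
  have P: "P \<in> Ws" using cl W1 W2 bp by blast
  define g where "g = add K (cmp K i1 g1) (cmp K i2 g2)"
  define h where "h = add K (cmp K h1 p1) (cmp K h2 p2)"
  have hp1: "cmp K h1 p1 \<in> Hom K P Y" using cmp_closed[OF p1 h1] .
  have hp2: "cmp K h2 p2 \<in> Hom K P Y" using cmp_closed[OF p2 h2] .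
  have ig1: "cmp K i1 g1 \<in> Hom K X P" using cmp_closed[OF g1 i1] .
  have ig2: "cmp K i2 g2 \<in> Hom K X P" using cmp_closed[OF g2 i2] .
  have gH: "g \<in> Hom K X P" unfolding g_def using add_closed[OF ig1 ig2] .
  have hH: "h \<in> Hom K P Y" unfolding h_def using add_closed[OF hp1 hp2] .
  have hi1: "cmp K h i1 = h1"
  proof -
    have "cmp K h i1 = add K (cmp K (cmp K h1 p1) i1) (cmp K (cmp K h2 p2) i1)"
      unfolding h_def by (rule cmp_add_right[OF hp1 hp2 i1])
    also have "\<dots> = add K (cmp K h1 (cmp K p1 i1)) (cmp K h2 (cmp K p2 i1))"
      by (simp add: cmp_assoc[OF i1 p1 h1] cmp_assoc[OF i1 p2 h2])
    also have "\<dots> = add K h1 (zro K W1 Y)" using r1 r4 idm_right[OF h1] cmp_zro_right[OF h2] by simp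
    also have "\<dots> = h1" using add_zro h1 by simp
    finally show ?thesis .
  qed
  have hi2: "cmp K h i2 = h2"
  proof -
    have "cmp K h i2 = add K (cmp K (cmp K h1 p1) i2) (cmp K (cmp K h2 p2) i2)"
      unfolding h_def by (rule cmp_add_right[OF hp1 hp2 i2])
    also have "\<dots> = add K (cmp K h1 (cmp K p1 i2)) (cmp K h2 (cmp K p2 i2))"
      by (simp add: cmp_assoc[OF i2 p1 h1] cmp_assoc[OF i2 p2 h2])
    also have "\<dots> = add K (zro K W2 Y) h2" using r2 r3 idm_right[OF h2] cmp_zro_right[OF h1] by simp
    also have "\<dots> = h2" using add_zro_left h2 by simp
    finally show ?thesis .
  qed
  have "cmp K h g = add K (cmp K h (cmp K i1 g1)) (cmp K h (cmp K i2 g2))"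
    unfolding g_def by (rule cmp_add_left[OF ig1 ig2 hH])
  also have "\<dots> = add K (cmp K (cmp K h i1) g1) (cmp K (cmp K h i2) g2)"
    by (simp add: cmp_assoc[OF g1 i1 hH] cmp_assoc[OF g2 i2 hH])
  also have "\<dots> = add K f1 f2" using hi1 hi2 e1 e2 by simp
  finally have "add K f1 f2 = cmp K h g" by simp
  then show ?thesis unfolding factors_through_def using P gH hH by blast
qed

lemma ft_Hom: "factors_through K Ws X Y f \<Longrightarrow> f \<in> Hom K X Y"
  unfolding factors_through_def using cmp_closed by blast

lemma stable_equiv:
  assumes W0: "W0 \<in> Ws"
    and cl: "\<And>P A B. A \<in> Ws \<Longrightarrow> B \<in> Ws \<Longrightarrow> is_biprod K P A B \<Longrightarrow> P \<in> Ws"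
  shows "equiv (Hom K X Y) (stable_rel K Ws X Y)"
proof (rule equivI)
  show "stable_rel K Ws X Y \<subseteq> Hom K X Y \<times> Hom K X Y" unfolding stable_rel_def by auto
  show "refl_on (Hom K X Y) (stable_rel K Ws X Y)"
    unfolding refl_on_def stable_rel_def using add_neg ft_zro[OF W0] by simp
  show "sym (stable_rel K Ws X Y)"
  proof (rule symI)
    fix x y assume "(x, y) \<in> stable_rel K Ws X Y"
    then have x: "x \<in> Hom K X Y" and y: "y \<in> Hom K X Y"
      and f: "factors_through K Ws X Y (add K x (neg K y))" unfolding stable_rel_def by auto
    have "factors_through K Ws X Y (add K y (neg K x))" using ft_neg[OF f] sub_sym[OF x y] by simp
    then show "(y, x) \<in> stable_rel K Ws X Y" unfolding stable_rel_def using x y by simp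
  qed
  show "trans (stable_rel K Ws X Y)"
  proof (rule transI)
    fix x y z assume "(x, y) \<in> stable_rel K Ws X Y" "(y, z) \<in> stable_rel K Ws X Y"
    then have x: "x \<in> Hom K X Y" and y: "y \<in> Hom K X Y" and z: "z \<in> Hom K X Y"
      and f1: "factors_through K Ws X Y (add K x (neg K y))"
      and f2: "factors_through K Ws X Y (add K y (neg K z))" unfolding stable_rel_def by auto
    have "factors_through K Ws X Y (add K x (neg K z))"
      using ft_add[OF cl f1 f2] sub_trans[OF x y z] by simp
    then show "(x, z) \<in> stable_rel K Ws X Y" unfolding stable_rel_def using x z by simp
  qed
qed

lemma cov_exact:
  assumes d: "dist K A Y N i p q" and c: "c \<in> Hom K X Y" and z: "cmp K p c = zro K X N"
  shows "\<exists>e \<in> Hom K X A. cmp K i e = c"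
proof -
  obtain Z0 where Z0: "is_zero K Z0" using zero_exists by blast
  have t1: "dist K X Z0 (sh K X) (zro K X Z0) (zro K Z0 (sh K X)) (neg K (shm K (idm K X)))"
    using dist_id[OF Z0] dist_rotate by blast
  have t2: "dist K Y N (sh K A) p q (neg K (shm K i))" using d dist_rotate by blast
  have iH: "i \<in> Hom K A Y" and pH: "p \<in> Hom K Y N" using dist_typed[OF d] by auto
  have "cmp K (zro K Z0 N) (zro K X Z0) = cmp K p c" using z cmp_zro_left[OF zro_closed] by simp
  then obtain g where gH: "g \<in> Hom K (sh K X) (sh K A)"
    and ge: "cmp K (neg K (shm K i)) g = cmp K (shm K c) (neg K (shm K (idm K X)))"
    using dist_morph[OF t1 t2 c zro_closed] by blast
  obtain e where eH: "e \<in> Hom K X A" and ee: "shm K e = g" using shm_surj gH by blast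
  have "neg K (shm K (cmp K i e)) = neg K (shm K c)"
  proof -
    have "neg K (shm K (cmp K i e)) = cmp K (neg K (shm K i)) g"
      using ee shm_cmp[OF eH iH] cmp_neg_left[OF shm_closed[OF iH] shm_closed[OF eH]] by simp
    also have "\<dots> = cmp K (shm K c) (neg K (idm K (sh K X)))" using ge shm_idm by simp
    also have "\<dots> = neg K (shm K c)"
      using cmp_neg_right[OF shm_closed[OF c] idm_closed] idm_right[OF shm_closed[OF c]] by simp
    finally show ?thesis .
  qed
  then have "shm K (cmp K i e) = shm K c"
    using neg_neg[OF shm_closed[OF cmp_closed[OF eH iH]]] neg_neg[OF shm_closed[OF c]] by metis
  then have "cmp K i e = c" using shm_inj[OF cmp_closed[OF eH iH] c] by simp
  then show ?thesis using eH by blast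
qed

lemma contra_exact:
  assumes d: "dist K X Y Z f g h" and c: "c \<in> Hom K Y W" and z: "cmp K c f = zro K X W"
  shows "\<exists>e \<in> Hom K Z W. cmp K e g = c"
proof -
  obtain Z0 where Z0: "is_zero K Z0" using zero_exists by blast
  have t1: "dist K Z0 (sh K W) (sh K W) (zro K Z0 (sh K W)) (neg K (shm K (idm K W)))
     (neg K (shm K (zro K W Z0)))"
    using dist_id[OF Z0] dist_rotate by blast
  have r3: "dist K (sh K X) (sh K Y) (sh K Z) (neg K (shm K f)) (neg K (shm K g)) (neg K (shm K h))"
    using d dist_rotate by blast
  have fH: "f \<in> Hom K X Y" and gH: "g \<in> Hom K Y Z" using dist_typed[OF d] by auto
  have sc: "shm K c \<in> Hom K (sh K Y) (sh K W)" using shm_closed c by blast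
  have "cmp K (shm K c) (neg K (shm K f)) = neg K (shm K (cmp K c f))"
    using cmp_neg_right[OF shm_closed[OF c] shm_closed[OF fH]] shm_cmp[OF fH c] by simp
  also have "\<dots> = zro K (sh K X) (sh K W)" using z shm_zro neg_zro by simp
  also have "\<dots> = cmp K (zro K Z0 (sh K W)) (zro K (sh K X) Z0)" using cmp_zro_left[OF zro_closed] by simp
  finally obtain \<gamma> where \<gamma>H: "\<gamma> \<in> Hom K (sh K Z) (sh K W)"
    and ge: "cmp K \<gamma> (neg K (shm K g)) = cmp K (neg K (shm K (idm K W))) (shm K c)"
    using dist_morph[OF r3 t1 zro_closed sc] by blast
  obtain e where eH: "e \<in> Hom K Z W" and ee: "shm K e = \<gamma>" using shm_surj \<gamma>H by blast
  have "neg K (shm K (cmp K e g)) = neg K (shm K c)"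
  proof -
    have "neg K (shm K (cmp K e g)) = cmp K \<gamma> (neg K (shm K g))"
      using ee shm_cmp[OF gH eH] cmp_neg_right[OF shm_closed[OF eH] shm_closed[OF gH]] by simp
    also have "\<dots> = cmp K (neg K (idm K (sh K W))) (shm K c)" using ge shm_idm by simp
    also have "\<dots> = neg K (shm K c)" using cmp_neg_left[OF idm_closed sc] idm_left[OF sc] by simp
    finally show ?thesis .
  qed
  then have "shm K (cmp K e g) = shm K c"
    using neg_neg[OF shm_closed[OF cmp_closed[OF gH eH]]] neg_neg[OF shm_closed[OF c]] by metis
  then have "cmp K e g = c" using shm_inj[OF cmp_closed[OF gH eH] c] by simp
  then show ?thesis using eH by blast
qed

lemma hom_zero_shift:
  assumes e: "ext1_zero K Xs Vs" and A: "A \<in> Xs" and N: "N \<in> shift_sub K Vs"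
    and f: "f \<in> Hom K A N"
  shows "f = zro K A N"
proof -
  obtain V' \<phi> where V': "V' \<in> Vs" and \<phi>: "iso K \<phi> N (sh K V')"
    using N unfolding shift_sub_def isomorphic_def by blast
  obtain \<psi> where \<phi>H: "\<phi> \<in> Hom K N (sh K V')" and \<psi>H: "\<psi> \<in> Hom K (sh K V') N"
    and pp: "cmp K \<psi> \<phi> = idm K N" using \<phi> unfolding iso_def by blast
  have "cmp K \<phi> f \<in> Hom K A (sh K V')" using cmp_closed f \<phi>H by blast
  then have z: "cmp K \<phi> f = zro K A (sh K V')" using e A V' unfolding ext1_zero_def by blast
  have "f = cmp K (idm K N) f" using idm_left f by simp
  also have "\<dots> = cmp K \<psi> (cmp K \<phi> f)" using pp cmp_assoc[OF f \<phi>H \<psi>H] by simp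
  also have "\<dots> = zro K A N" using z cmp_zro_right \<psi>H by simp
  finally show ?thesis .
qed

end

lemma quot_some:
  assumes e: "equiv A r" and F: "F \<in> A // r"
  shows "(SOME x. x \<in> F) \<in> F \<and> F = r``{SOME x. x \<in> F} \<and> (SOME x. x \<in> F) \<in> A"
proof -
  obtain x where Fx: "F = r``{x}" and x: "x \<in> A" using F by (rule quotientE)
  have "x \<in> F" using equiv_class_self[OF e x] Fx by simp
  then have s: "(SOME x. x \<in> F) \<in> F" by (rule someI)
  then have xr: "(x, SOME x. x \<in> F) \<in> r" using Fx by simp
  have "F = r``{SOME x. x \<in> F}" using Fx equiv_class_eq[OF e xr] by simp
  moreover have "(SOME x. x \<in> F) \<in> A" using subsetD[OF equiv_type[OF e] xr] by simp
  ultimately show ?thesis using s by (intro conjI)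
qed


theorem proposition3p6:
  fixes K :: "('o, 'm) tcat"
  assumes "triangulated K"
    and "twin_cotorsion_pair K \<S> \<T> \<U> \<V>"
    and "U \<in> \<U>" and "V \<in> \<V>" and "dist K V U C f a g"
    and "sh K S' \<in> \<S>" and "T \<in> \<T>" and "dist K S' U T b b' b''"
    and "dist K S' C Z (cmp K a b) z h"
    and "Y \<in> ext_star K (\<T> \<inter> \<U>) (shift_sub K \<V>)"
  shows "bij_betw (\<lambda>F. stclass K (\<T> \<inter> \<U>) C Y (cmp K (SOME e. e \<in> F) z))
           (stable_hom K (\<T> \<inter> \<U>) Z Y) (stable_hom K (\<T> \<inter> \<U>) C Y)"
proof -
  interpret triangulated K by fact
  let ?W = "\<T> \<inter> \<U>"
  have cpST: "cotorsion_pair K \<S> \<T>" and cpUV: "cotorsion_pair K \<U> \<V>"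
    and eSV: "ext1_zero K \<S> \<V>" using assms(2) unfolding twin_cotorsion_pair_def by auto
  have eST: "ext1_zero K \<S> \<T>" and subT: "subcat K \<T>" using cpST unfolding cotorsion_pair_def by auto
  have eUV: "ext1_zero K \<U> \<V>" and subU: "subcat K \<U>" using cpUV unfolding cotorsion_pair_def by auto
  have cl: "\<And>P A B. A \<in> ?W \<Longrightarrow> B \<in> ?W \<Longrightarrow> is_biprod K P A B \<Longrightarrow> P \<in> ?W"
    using subT subU unfolding subcat_def by blast
  obtain W0 N \<iota> p q where W0: "W0 \<in> ?W" and N: "N \<in> shift_sub K \<V>"
    and dY: "dist K W0 Y N \<iota> p q"
    using assms(10) unfolding ext_star_def by blast
  have \<iota>H: "\<iota> \<in> Hom K W0 Y" and pH: "p \<in> Hom K Y N" using dist_typed[OF dY] by auto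
  have aH: "a \<in> Hom K U C" using dist_typed[OF assms(5)] by auto
  have bH: "b \<in> Hom K S' U" using dist_typed[OF assms(8)] by auto
  have zH: "z \<in> Hom K C Z" and hH: "h \<in> Hom K Z (sh K S')"
    and abH: "cmp K a b \<in> Hom K S' C" using dist_typed[OF assms(9)] by auto
  have H1: "\<And>X k. X \<in> \<T> \<Longrightarrow> k \<in> Hom K S' X \<Longrightarrow> k = zro K S' X"
  proof -
    fix X k assume X: "X \<in> \<T>" and k: "k \<in> Hom K S' X"
    have "shm K k \<in> Hom K (sh K S') (sh K X)" using shm_closed[OF k] .
    then have "shm K k = zro K (sh K S') (sh K X)"
      using eST assms(6) X unfolding ext1_zero_def by blast
    then have "shm K k = shm K (zro K S' X)" using shm_zro by simp
    then show "k = zro K S' X" using shm_inj k zro_closed by blast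
  qed
  have surj: "\<And>c. c \<in> Hom K C Y \<Longrightarrow> \<exists>e \<in> Hom K Z Y. cmp K e z = c"
  proof -
    fix c assume c: "c \<in> Hom K C Y"
    have ca: "cmp K c a \<in> Hom K U Y" using cmp_closed[OF aH c] .
    have "cmp K p (cmp K c a) = zro K U N"
      using hom_zero_shift[OF eUV assms(3) N] cmp_closed[OF ca pH] by blast
    then obtain u where u: "u \<in> Hom K U W0" and ue: "cmp K \<iota> u = cmp K c a"
      using cov_exact[OF dY ca] by blast
    have ub: "cmp K u b = zro K S' W0" using H1 W0 cmp_closed[OF bH u] by blast
    have "cmp K c (cmp K a b) = cmp K (cmp K c a) b" using cmp_assoc[OF bH aH c] .
    also have "\<dots> = cmp K (cmp K \<iota> u) b" using ue by simp
    also have "\<dots> = cmp K \<iota> (cmp K u b)" using cmp_assoc[OF bH u \<iota>H] by simp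
    also have "\<dots> = zro K S' Y" using ub cmp_zro_right[OF \<iota>H] by simp
    finally show "\<exists>e \<in> Hom K Z Y. cmp K e z = c" using contra_exact[OF assms(9) c] by blast
  qed
  have key: "\<And>d. d \<in> Hom K Z Y \<Longrightarrow> factors_through K ?W C Y (cmp K d z) \<Longrightarrow>
      factors_through K ?W Z Y d"
  proof -
    fix d assume dH: "d \<in> Hom K Z Y" and ft: "factors_through K ?W C Y (cmp K d z)"
    obtain W1 \<alpha> \<beta> where W1: "W1 \<in> ?W" and \<alpha>: "\<alpha> \<in> Hom K C W1" and \<beta>: "\<beta> \<in> Hom K W1 Y"
      and dz: "cmp K d z = cmp K \<beta> \<alpha>" using ft unfolding factors_through_def by blast
    have "cmp K \<alpha> (cmp K a b) = zro K S' W1" using H1 W1 cmp_closed[OF abH \<alpha>] by blast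
    then obtain \<alpha>' where \<alpha>': "\<alpha>' \<in> Hom K Z W1" and \<alpha>e: "cmp K \<alpha>' z = \<alpha>"
      using contra_exact[OF assms(9) \<alpha>] by blast
    define m where "m = add K d (neg K (cmp K \<beta> \<alpha>'))"
    have ba: "cmp K \<beta> \<alpha>' \<in> Hom K Z Y" using cmp_closed[OF \<alpha>' \<beta>] .
    have mH: "m \<in> Hom K Z Y" unfolding m_def using add_closed neg_closed dH ba by blast
    have mz: "cmp K m z = zro K C Y"
    proof -
      have "cmp K m z = add K (cmp K d z) (neg K (cmp K (cmp K \<beta> \<alpha>') z))"
        unfolding m_def using cmp_sub_right[OF dH ba zH] .
      also have "\<dots> = add K (cmp K \<beta> \<alpha>) (neg K (cmp K \<beta> \<alpha>))"
        using cmp_assoc[OF zH \<alpha>' \<beta>] \<alpha>e dz by simp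
      also have "\<dots> = zro K C Y" using add_neg cmp_closed[OF \<alpha> \<beta>] by simp
      finally show ?thesis .
    qed
    have rot: "dist K C Z (sh K S') z h (neg K (shm K (cmp K a b)))"
      using assms(9) dist_rotate by blast
    obtain \<gamma> where \<gamma>: "\<gamma> \<in> Hom K (sh K S') Y" and \<gamma>e: "cmp K \<gamma> h = m"
      using contra_exact[OF rot mH mz] by blast
    have "cmp K p \<gamma> = zro K (sh K S') N"
      using hom_zero_shift[OF eSV assms(6) N] cmp_closed[OF \<gamma> pH] by blast
    then obtain \<delta> where \<delta>: "\<delta> \<in> Hom K (sh K S') W0" and \<delta>e: "cmp K \<iota> \<delta> = \<gamma>"
      using cov_exact[OF dY \<gamma>] by blast
    have "m = cmp K \<iota> (cmp K \<delta> h)" using \<gamma>e \<delta>e cmp_assoc[OF hH \<delta> \<iota>H] by simp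
    then have ftm: "factors_through K ?W Z Y m"
      unfolding factors_through_def using W0 \<iota>H cmp_closed[OF hH \<delta>] by blast
    have ftb: "factors_through K ?W Z Y (cmp K \<beta> \<alpha>')"
      unfolding factors_through_def using W1 \<alpha>' \<beta> by blast
    have "d = add K m (cmp K \<beta> \<alpha>')" unfolding m_def using sub_add_cancel[OF dH ba] by simp
    then show "factors_through K ?W Z Y d" using ft_add[OF cl ftm ftb] by simp
  qed
  have eq1: "equiv (Hom K Z Y) (stable_rel K ?W Z Y)" using stable_equiv[OF W0 cl] .
  have eq2: "equiv (Hom K C Y) (stable_rel K ?W C Y)" using stable_equiv[OF W0 cl] .
  show ?thesis
    unfolding bij_betw_def stable_hom_def stclass_def
  proof (rule conjI)
    show "inj_on (\<lambda>F. stable_rel K ?W C Y `` {cmp K (SOME e. e \<in> F) z}) (Hom K Z Y // stable_rel K ?W Z Y)"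
    proof (rule inj_onI)
      fix F1 F2 assume F1: "F1 \<in> Hom K Z Y // stable_rel K ?W Z Y"
        and F2: "F2 \<in> Hom K Z Y // stable_rel K ?W Z Y"
        and eq: "stable_rel K ?W C Y `` {cmp K (SOME e. e \<in> F1) z} =
                 stable_rel K ?W C Y `` {cmp K (SOME e. e \<in> F2) z}"
      define e1 where "e1 = (SOME e. e \<in> F1)"
      define e2 where "e2 = (SOME e. e \<in> F2)"
      have p1: "F1 = stable_rel K ?W Z Y `` {e1}" "e1 \<in> Hom K Z Y"
        using quot_some[OF eq1 F1] unfolding e1_def by auto
      have p2: "F2 = stable_rel K ?W Z Y `` {e2}" "e2 \<in> Hom K Z Y"
        using quot_some[OF eq1 F2] unfolding e2_def by auto
      have "(cmp K e1 z, cmp K e2 z) \<in> stable_rel K ?W C Y"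
        using eq eq_equiv_class_iff[OF eq2 cmp_closed[OF zH p1(2)] cmp_closed[OF zH p2(2)]]
        unfolding e1_def e2_def by simp
      then have "factors_through K ?W C Y (cmp K (add K e1 (neg K e2)) z)"
        unfolding stable_rel_def using cmp_sub_right[OF p1(2) p2(2) zH] by simp
      then have "factors_through K ?W Z Y (add K e1 (neg K e2))"
        by (rule key[OF add_closed[OF p1(2) neg_closed[OF p2(2)]]])
      then have "(e1, e2) \<in> stable_rel K ?W Z Y" unfolding stable_rel_def using p1(2) p2(2) by simp
      then show "F1 = F2" using p1(1) p2(1) equiv_class_eq[OF eq1] by simp
    qed
  next
    show "(\<lambda>F. stable_rel K ?W C Y `` {cmp K (SOME e. e \<in> F) z}) ` (Hom K Z Y // stable_rel K ?W Z Y)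
        = Hom K C Y // stable_rel K ?W C Y"
    proof
      show "(\<lambda>F. stable_rel K ?W C Y `` {cmp K (SOME e. e \<in> F) z}) ` (Hom K Z Y // stable_rel K ?W Z Y)
        \<subseteq> Hom K C Y // stable_rel K ?W C Y"
      proof (rule image_subsetI)
        fix F assume F: "F \<in> Hom K Z Y // stable_rel K ?W Z Y"
        have "(SOME e. e \<in> F) \<in> Hom K Z Y" using quot_some[OF eq1 F] by auto
        then show "stable_rel K ?W C Y `` {cmp K (SOME e. e \<in> F) z} \<in> Hom K C Y // stable_rel K ?W C Y"
          by (rule quotientI[OF cmp_closed[OF zH]])
      qed
    next
      show "Hom K C Y // stable_rel K ?W C Y \<subseteq>
        (\<lambda>F. stable_rel K ?W C Y `` {cmp K (SOME e. e \<in> F) z}) ` (Hom K Z Y // stable_rel K ?W Z Y)"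
      proof
        fix G assume "G \<in> Hom K C Y // stable_rel K ?W C Y"
        then obtain c where Gc: "G = stable_rel K ?W C Y `` {c}" and c: "c \<in> Hom K C Y"
          by (rule quotientE)
        obtain e where e: "e \<in> Hom K Z Y" and ee: "cmp K e z = c" using surj[OF c] by blast
        define F where "F = stable_rel K ?W Z Y `` {e}"
        have F: "F \<in> Hom K Z Y // stable_rel K ?W Z Y" unfolding F_def using quotientI e .
        define e' where "e' = (SOME x. x \<in> F)"
        have "e' \<in> F" "e' \<in> Hom K Z Y" using quot_some[OF eq1 F] unfolding e'_def by auto
        then have "(e, e') \<in> stable_rel K ?W Z Y" unfolding F_def by simp
        then have "factors_through K ?W Z Y (add K e (neg K e'))" unfolding stable_rel_def by simp
        then have "factors_through K ?W C Y (cmp K (add K e (neg K e')) z)"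
          by (rule ft_cmp_right[OF _ zH])
        then have "(cmp K e z, cmp K e' z) \<in> stable_rel K ?W C Y"
          unfolding stable_rel_def using cmp_sub_right[OF e \<open>e' \<in> Hom K Z Y\<close> zH]
            cmp_closed[OF zH e] cmp_closed[OF zH \<open>e' \<in> Hom K Z Y\<close>] by simp
        then have "G = stable_rel K ?W C Y `` {cmp K e' z}"
          using Gc ee equiv_class_eq[OF eq2] by simp
        then show "G \<in> (\<lambda>F. stable_rel K ?W C Y `` {cmp K (SOME e. e \<in> F) z}) ` (Hom K Z Y // stable_rel K ?W Z Y)"
          unfolding e'_def by (rule rev_image_eqI[OF F])
      qed
    qed
  qed
qed

end
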